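(* In the setting of the context, let $(h_1,h_2)\in\mathbb C(s)^2$ satisfy $\widetilde\gamma_1h_1+\widetilde\gamma_2h_2+\omega=0$, $h_1^{\iota_1}=h_1$, $h_2^{\iota_2}=h_2$. If $P$ is a pole of $h_1$ distinct from $0$ and $\infty$, then there exist integers $m,n\ge0$ such that $\sigma^{-m}P\in\mathcal L_1^-$ and $\sigma^nP\in\mathcal L_1^+$. Likewise, if $P$ is a pole of $h_2$ distinct from $0$ and $\infty$, then there exist integers $m,n\ge0$ such that $\sigma^{-m}P\in\mathcal L_2^-$ and $\sigma^nP\in\mathcal L_2^+$.
   Context: For a genus-zero weighted quadrant walk model (step set one of the five genus-zero sets, step weights $d_{i,j}>0$, Boltzmann weights $a,b>0$), $A=1-1/a$, $B=1-1/b$, $\omega=1-A-B$. $s\mapsto(x(s),y(s))$ is a fixed rational parametrization by $\mathbb P^1$ of the kernel curve (for a fixed real $t$ transcendental over $\mathbb Q((d_{i,j}),a,b)$), with $x(1/s)=x(s)$, $y(q/s)=y(s)$ for a fixed real $q$ not a root of unity; $\iota_1(s)=1/s$, $\iota_2(s)=q/s$, $\sigma(s)=qs$, $h^\tau=h\circ\tau$. $\widetilde\gamma_1=A/x(s)-td_{1,-1}/y(s)$ and $\widetilde\gamma_2=B/y(s)-td_{-1,1}/x(s)$ have divisors $(\widetilde\gamma_1)=P_1+P_2-0-\infty$ and $(\widetilde\gamma_2)=P_3+P_4-0-\infty$ with $P_i\notin\{0,\infty\}$. Define $\mathcal L_1^-=\{P_1,P_2,\iota_2P_3,\iota_2P_4\}$,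 $\mathcal L_1^+=\{\iota_1P_1,\iota_1P_2,\sigma^{-1}P_3,\sigma^{-1}P_4\}$, $\mathcal L_2^-=\{\sigma P_1,\sigma P_2,\iota_2P_3,\iota_2P_4\}$, $\mathcal L_2^+=\{\iota_1P_1,\iota_1P_2,P_3,P_4\}$. *)

theory Defs
  imports "HOL-Complex_Analysis.Complex_Analysis" "HOL-Computational_Algebra.Polynomial"
begin

text \<open>An element of C(s), viewed as a complex function that agrees with a
  quotient of polynomials outside a finite set (values at the finitely many
  exceptional points are irrelevant; identities in C(s) are stated cofinitely).\<close>
definition rational_function :: "(complex \<Rightarrow> complex) \<Rightarrow> bool" where
  "rational_function f \<longleftrightarrow>
     (\<exists>p r :: complex poly. r \<noteq> 0 \<and> (\<forall>\<^sub>F s in cofinite. f s = poly p s / poly r s))"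

definition rf_eq :: "(complex \<Rightarrow> complex) \<Rightarrow> (complex \<Rightarrow> complex) \<Rightarrow> bool" where
  "rf_eq f g \<longleftrightarrow> (\<forall>\<^sub>F s in cofinite. f s = g s)"

text \<open>The automorphisms of P^1 (restricted to finite nonzero points).\<close>
definition iota1 :: "complex \<Rightarrow> complex" where "iota1 s = 1 / s"
definition iota2 :: "complex \<Rightarrow> complex \<Rightarrow> complex" where "iota2 q s = q / s"
definition sigma :: "complex \<Rightarrow> complex \<Rightarrow> complex" where "sigma q s = q * s"
definition sigma_inv :: "complex \<Rightarrow> complex \<Rightarrow> complex" where "sigma_inv q s = s / q"

definition L1m :: "complex \<Rightarrow> complex \<Rightarrow> complex \<Rightarrow> complex \<Rightarrow> complex \<Rightarrow> complex set" where
  "L1m q P1 P2 P3 P4 = {P1, P2, iota2 q P3, iota2 q P4}"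
definition L1p :: "complex \<Rightarrow> complex \<Rightarrow> complex \<Rightarrow> complex \<Rightarrow> complex \<Rightarrow> complex set" where
  "L1p q P1 P2 P3 P4 = {iota1 P1, iota1 P2, sigma_inv q P3, sigma_inv q P4}"
definition L2m :: "complex \<Rightarrow> complex \<Rightarrow> complex \<Rightarrow> complex \<Rightarrow> complex \<Rightarrow> complex set" where
  "L2m q P1 P2 P3 P4 = {sigma q P1, sigma q P2, iota2 q P3, iota2 q P4}"
definition L2p :: "complex \<Rightarrow> complex \<Rightarrow> complex \<Rightarrow> complex \<Rightarrow> complex \<Rightarrow> complex set" where
  "L2p q P1 P2 P3 P4 = {iota1 P1, iota1 P2, P3, P4}"

end

theory Submission imports Defs begin

lemma cof_at:
  fixes x :: complex
  assumes "eventually P cofinite" shows "eventually P (at x)"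
proof -
  let ?S = "{y. \<not> P y}"
  have fin: "finite ?S" using assms by (simp add: eventually_cofinite)
  have "open (UNIV - (?S - {x}))" using fin by (intro open_Diff) (auto intro: finite_imp_closed)
  then have "eventually (\<lambda>y. y \<in> (UNIV - (?S - {x})) - {x}) (at x)"
    by (intro eventually_at_in_open) auto
  then show ?thesis by (rule eventually_mono) auto
qed

lemma pole_rf: "is_pole f P \<Longrightarrow> rf_eq f g \<Longrightarrow> is_pole g P"
  unfolding rf_eq_def using cof_at is_pole_cong by blast

lemma pole_comp:
  fixes c P :: complex
  assumes "is_pole h P" "P \<noteq> 0" "c \<noteq> 0"
  shows "is_pole (\<lambda>s. h (c / s)) (c / P)"
proof -
  have "filterlim (\<lambda>s. c / s) (at P) (at (c / P))"
  proof (rule filterlim_atI)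
    have "((\<lambda>s. c / s) \<longlongrightarrow> c / (c / P)) (at (c / P))"
      using assms by (intro tendsto_intros) auto
    then show "((\<lambda>s. c / s) \<longlongrightarrow> P) (at (c / P))" using assms by simp
    have "eventually (\<lambda>s. s \<noteq> c / P) (at (c / P))" by (simp add: eventually_at_filter)
    then show "eventually (\<lambda>s. c / s \<noteq> P) (at (c / P))"
      by (rule eventually_mono) (use assms in \<open>auto simp: field_simps\<close>)
  qed
  then show ?thesis using assms(1) unfolding is_pole_def
    by (rule filterlim_compose[rotated])
qed

lemma pole_sym:
  fixes c P :: complex
  assumes "is_pole h P" "P \<noteq> 0" "c \<noteq> 0" "rf_eq (\<lambda>s. h (c / s)) h"
  shows "is_pole h (c / P)"
  using pole_rf[OF pole_comp[OF assms(1-3)] assms(4)] .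

lemma key:
  fixes g1 g2 h1 h2 :: "complex \<Rightarrow> complex"
  assumes "filterlim h1 at_infinity F" "(g1 \<longlongrightarrow> a1) F" "a1 \<noteq> 0" "(g2 \<longlongrightarrow> a2) F"
    "eventually (\<lambda>s. g1 s * h1 s + g2 s * h2 s + w = 0) F"
  shows "filterlim h2 at_infinity F"
proof -
  have l1: "filterlim (\<lambda>s. g1 s * h1 s) at_infinity F"
    using tendsto_mult_filterlim_at_infinity[OF assms(2,3,1)] .
  have l3: "filterlim (\<lambda>s. g2 s * h2 s) at_infinity F"
    unfolding filterlim_at_infinity[OF order_refl]
  proof (intro allI impI)
    fix r :: real assume r: "r > 0"
    have "eventually (\<lambda>s. r + norm w \<le> norm (g1 s * h1 s)) F"
      using l1 unfolding filterlim_at_infinity[OF order_refl] using r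
      by (metis add_pos_nonneg norm_ge_zero)
    then show "eventually (\<lambda>s. r \<le> norm (g2 s * h2 s)) F"
    proof (rule eventually_elim2[OF _ assms(5)])
      fix s assume a: "r + norm w \<le> norm (g1 s * h1 s)" and b: "g1 s * h1 s + g2 s * h2 s + w = 0"
      have "g2 s * h2 s = - (g1 s * h1 s + w)" using b by (simp add: algebra_simps add_eq_0_iff)
      then have "norm (g2 s * h2 s) = norm (g1 s * h1 s + w)" by (metis norm_minus_cancel)
      moreover have "norm (g1 s * h1 s + w) \<ge> norm (g1 s * h1 s) - norm w" by (metis norm_diff_ineq norm_minus_cancel diff_minus_eq_add)
      ultimately show "r \<le> norm (g2 s * h2 s)" using a by linarith
    qed
  qed
  define M where "M = norm a2 + 1"
  have Mpos: "M > 0" unfolding M_def by (metis add_nonneg_pos norm_ge_zero zero_less_one)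
  have bd: "eventually (\<lambda>s. norm (g2 s) \<le> M) F"
  proof -
    have "eventually (\<lambda>s. dist (g2 s) a2 < 1) F" using assms(4) by (rule tendstoD) simp
    then show ?thesis
    proof (rule eventually_mono)
      fix s assume "dist (g2 s) a2 < 1"
      moreover have "norm (g2 s) \<le> norm a2 + norm (g2 s - a2)" by (rule norm_triangle_sub)
      ultimately show "norm (g2 s) \<le> M" unfolding M_def dist_norm by linarith
    qed
  qed
  show ?thesis unfolding filterlim_at_infinity[OF order_refl]
  proof (intro allI impI)
    fix r :: real assume r: "r > 0"
    have "eventually (\<lambda>s. r * M \<le> norm (g2 s * h2 s)) F"
      using l3 unfolding filterlim_at_infinity[OF order_refl] using r Mpos by simp
    then show "eventually (\<lambda>s. r \<le> norm (h2 s)) F"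
    proof (rule eventually_elim2[OF _ bd])
      fix s assume a: "r * M \<le> norm (g2 s * h2 s)" and b: "norm (g2 s) \<le> M"
      have "norm (g2 s * h2 s) \<le> M * norm (h2 s)"
        using b by (simp add: norm_mult mult_right_mono)
      then have "r * M \<le> norm (h2 s) * M" using a by (simp add: mult.commute)
      then show "r \<le> norm (h2 s)" using Mpos by simp
    qed
  qed
qed


lemma rf_tendsto:
  fixes f g :: "complex \<Rightarrow> complex"
  assumes "rf_eq f g" "(g \<longlongrightarrow> L) (at Q)" shows "(f \<longlongrightarrow> L) (at Q)"
proof -
  have "eventually (\<lambda>s. g s = f s) (at Q)"
    using cof_at[of "\<lambda>s. f s = g s"] assms(1) unfolding rf_eq_def by (simp add: eq_commute)
  then show ?thesis using assms(2) by (rule Lim_transform_eventually[rotated])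
qed

lemma poles_finite:
  assumes "rational_function h" shows "finite {P. is_pole h P}"
proof -
  obtain p r :: "complex poly" where r: "r \<noteq> 0" and e: "\<forall>\<^sub>F s in cofinite. h s = poly p s / poly r s"
    using assms unfolding rational_function_def by blast
  have "{P. is_pole h P} \<subseteq> {x. poly r x = 0}"
  proof
    fix P assume P: "P \<in> {P. is_pole h P}"
    show "P \<in> {x. poly r x = 0}"
    proof (rule ccontr)
      assume "P \<notin> {x. poly r x = 0}"
      then have nz: "poly r P \<noteq> 0" by simp
      have "((\<lambda>s. poly p s / poly r s) \<longlongrightarrow> poly p P / poly r P) (at P)"
        using nz by (intro tendsto_intros) auto
      then have "(h \<longlongrightarrow> poly p P / poly r P) (at P)"
        using rf_tendsto[of h "\<lambda>s. poly p s / poly r s"] e unfolding rf_eq_def by blast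
      then show False using P not_tendsto_and_filterlim_at_infinity[of "at P" h] unfolding is_pole_def
        by (simp add: at_neq_bot)
    qed
  qed
  then show ?thesis using poly_roots_finite[OF r] finite_subset by blast
qed

lemma iter_hit:
  assumes "finite S" "P \<in> S" "\<forall>Q\<in>S. Q \<notin> L \<longrightarrow> g Q \<in> S" "inj (\<lambda>k::nat. (g ^^ k) P)"
  shows "\<exists>k::nat. (g ^^ k) P \<in> L"
proof (rule ccontr)
  assume "\<not> ?thesis"
  then have nL: "\<And>k. (g ^^ k) P \<notin> L" by blast
  have "(g ^^ k) P \<in> S" for k
    by (induction k) (use assms(2,3) nL in auto)
  then have "range (\<lambda>k::nat. (g ^^ k) P) \<subseteq> S" by blast
  moreover have "infinite (range (\<lambda>k::nat. (g ^^ k) P))" using assms(4) by (rule range_inj_infinite)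
  ultimately show False using assms(1) finite_subset by blast
qed

lemma sigma_pow: "(sigma c ^^ k) P = c ^ k * P"
  by (induction k) (auto simp: sigma_def)

lemma sigma_inv_pow: "(sigma_inv c ^^ k) P = P / c ^ k"
  by (induction k) (auto simp: sigma_inv_def field_simps)

lemma pow_inj_aux:
  fixes c :: complex
  assumes "\<forall>n::nat. n > 0 \<longrightarrow> c ^ n \<noteq> 1" "c \<noteq> 0" "a < b"
  shows "c ^ a \<noteq> c ^ b"
proof
  assume e: "c ^ a = c ^ b"
  have "c ^ b = c ^ a * c ^ (b - a)" using assms(3) by (simp flip: power_add)
  then have "c ^ (b - a) = 1" using e assms(2) by simp
  moreover have "b - a > 0" using assms(3) by simp
  ultimately show False using assms(1) by blast
qed

lemma pow_inj:
  fixes c :: complex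
  assumes "\<forall>n::nat. n > 0 \<longrightarrow> c ^ n \<noteq> 1" "c \<noteq> 0" "c ^ j = c ^ k"
  shows "j = k"
  using pow_inj_aux[OF assms(1,2), of j k] pow_inj_aux[OF assms(1,2), of k j] assms(3)
  by (cases j k rule: linorder_cases) auto

theorem lemma3p7:
  fixes a b t q :: real
    and d :: "int \<Rightarrow> int \<Rightarrow> real"
    and x y h1 h2 :: "complex \<Rightarrow> complex"
    and P1 P2 P3 P4 :: complex
  defines "A \<equiv> 1 - 1 / a" and "B \<equiv> 1 - 1 / b"
  defines "\<omega> \<equiv> 1 - A - B"
  defines "\<gamma>1 \<equiv> (\<lambda>s. complex_of_real A / x s - complex_of_real (t * d 1 (-1)) / y s)"
  defines "\<gamma>2 \<equiv> (\<lambda>s. complex_of_real B / y s - complex_of_real (t * d (-1) 1) / x s)"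
  assumes d_pos: "d 1 (-1) > 0" "d (-1) 1 > 0"
    and a_pos: "a > 0" and b_pos: "b > 0"
    and q_nonroot: "\<forall>n::nat. n > 0 \<longrightarrow> q ^ n \<noteq> 1" and q_nz: "q \<noteq> 0"
    and x_rat: "rational_function x" and y_rat: "rational_function y"
    and x_sym: "rf_eq (\<lambda>s. x (iota1 s)) x"
    and y_sym: "rf_eq (\<lambda>s. y (iota2 (complex_of_real q) s)) y"
    and P_nz: "P1 \<noteq> 0" "P2 \<noteq> 0" "P3 \<noteq> 0" "P4 \<noteq> 0"
    and div1: "\<exists>c. c \<noteq> 0 \<and> rf_eq \<gamma>1 (\<lambda>s. c * (s - P1) * (s - P2) / s)"
    and div2: "\<exists>c. c \<noteq> 0 \<and> rf_eq \<gamma>2 (\<lambda>s. c * (s - P3) * (s - P4) / s)"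
    and h1_rat: "rational_function h1" and h2_rat: "rational_function h2"
    and eqn: "rf_eq (\<lambda>s. \<gamma>1 s * h1 s + \<gamma>2 s * h2 s + complex_of_real \<omega>) (\<lambda>s. 0)"
    and h1_inv: "rf_eq (\<lambda>s. h1 (iota1 s)) h1"
    and h2_inv: "rf_eq (\<lambda>s. h2 (iota2 (complex_of_real q) s)) h2"
  shows "(\<forall>P. is_pole h1 P \<and> P \<noteq> 0 \<longrightarrow>
            (\<exists>m::nat. (sigma_inv (complex_of_real q) ^^ m) P \<in> L1m (complex_of_real q) P1 P2 P3 P4) \<and>
            (\<exists>n::nat. (sigma (complex_of_real q) ^^ n) P \<in> L1p (complex_of_real q) P1 P2 P3 P4))
       \<and> (\<forall>P. is_pole h2 P \<and> P \<noteq> 0 \<longrightarrow>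
            (\<exists>m::nat. (sigma_inv (complex_of_real q) ^^ m) P \<in> L2m (complex_of_real q) P1 P2 P3 P4) \<and>
            (\<exists>n::nat. (sigma (complex_of_real q) ^^ n) P \<in> L2p (complex_of_real q) P1 P2 P3 P4))"
proof -
  define qc where "qc = complex_of_real q"
  have qc_nz: "qc \<noteq> 0" using q_nz by (simp add: qc_def)
  have qc_nr: "\<forall>n::nat. n > 0 \<longrightarrow> qc ^ n \<noteq> 1"
  proof (intro allI impI)
    fix n :: nat assume "n > 0"
    then have "q ^ n \<noteq> 1" using q_nonroot by blast
    then show "qc ^ n \<noteq> 1" unfolding qc_def by (metis of_real_eq_1_iff of_real_power)
  qed
  obtain c1 where c1: "c1 \<noteq> 0" "rf_eq \<gamma>1 (\<lambda>s. c1 * (s - P1) * (s - P2) / s)" using div1 by blast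
  obtain c2 where c2: "c2 \<noteq> 0" "rf_eq \<gamma>2 (\<lambda>s. c2 * (s - P3) * (s - P4) / s)" using div2 by blast
  have ev: "eventually (\<lambda>s. \<gamma>1 s * h1 s + \<gamma>2 s * h2 s + complex_of_real \<omega> = 0) (at Q)" for Q
    using cof_at eqn unfolding rf_eq_def by blast
  have ev': "eventually (\<lambda>s. \<gamma>2 s * h2 s + \<gamma>1 s * h1 s + complex_of_real \<omega> = 0) (at Q)" for Q
    using ev[of Q] by (rule eventually_mono) (simp add: algebra_simps)
  have t1: "(\<gamma>1 \<longlongrightarrow> c1 * (Q - P1) * (Q - P2) / Q) (at Q)" if "Q \<noteq> 0" for Q
    by (rule rf_tendsto[OF c1(2)]) (use that in \<open>intro tendsto_intros, auto\<close>)
  have t2: "(\<gamma>2 \<longlongrightarrow> c2 * (Q - P3) * (Q - P4) / Q) (at Q)" if "Q \<noteq> 0" for Q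
    by (rule rf_tendsto[OF c2(2)]) (use that in \<open>intro tendsto_intros, auto\<close>)
  have A: "is_pole h2 Q" if "is_pole h1 Q" "Q \<noteq> 0" "Q \<noteq> P1" "Q \<noteq> P2" for Q
    using key[OF that(1)[unfolded is_pole_def] t1[OF that(2)] _ t2[OF that(2)] ev[of Q]] that c1(1)
    unfolding is_pole_def by simp
  have B: "is_pole h1 Q" if "is_pole h2 Q" "Q \<noteq> 0" "Q \<noteq> P3" "Q \<noteq> P4" for Q
    using key[OF that(1)[unfolded is_pole_def] t2[OF that(2)] _ t1[OF that(2)] ev'[of Q]] that c2(1)
    unfolding is_pole_def by simp
  have C: "is_pole h1 (1 / Q)" if "is_pole h1 Q" "Q \<noteq> 0" for Q
    using pole_sym[OF that, of 1] h1_inv unfolding iota1_def by simp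
  have D: "is_pole h2 (qc / Q)" if "is_pole h2 Q" "Q \<noteq> 0" for Q
    using pole_sym[OF that qc_nz] h2_inv unfolding iota2_def qc_def by simp
  have inj_up: "inj (\<lambda>k::nat. (sigma qc ^^ k) P)" if "P \<noteq> 0" for P
    unfolding sigma_pow using that by (intro injI) (use pow_inj[OF qc_nr qc_nz] in auto)
  have inj_dn: "inj (\<lambda>k::nat. (sigma_inv qc ^^ k) P)" if "P \<noteq> 0" for P
    unfolding sigma_inv_pow using that qc_nz by (intro injI) (use pow_inj[OF qc_nr qc_nz] in auto)
  define S1 where "S1 = {Q. is_pole h1 Q \<and> Q \<noteq> 0}"
  define S2 where "S2 = {Q. is_pole h2 Q \<and> Q \<noteq> 0}"
  have fS1: "finite S1" unfolding S1_def by (rule finite_subset[OF _ poles_finite[OF h1_rat]]) auto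
  have fS2: "finite S2" unfolding S2_def by (rule finite_subset[OF _ poles_finite[OF h2_rat]]) auto
  have dn1: "\<forall>Q\<in>S1. Q \<notin> L1m qc P1 P2 P3 P4 \<longrightarrow> sigma_inv qc Q \<in> S1"
  proof (intro ballI impI)
    fix Q assume Q: "Q \<in> S1" "Q \<notin> L1m qc P1 P2 P3 P4"
    then have Q0: "Q \<noteq> 0" and pQ: "is_pole h1 Q" and n: "Q \<noteq> P1" "Q \<noteq> P2" "Q \<noteq> qc / P3" "Q \<noteq> qc / P4"
      by (auto simp: S1_def L1m_def iota2_def)
    have "is_pole h2 (qc / Q)" using D[OF A[OF pQ Q0 n(1,2)] Q0] .
    moreover have "qc / Q \<noteq> P3" "qc / Q \<noteq> P4" "qc / Q \<noteq> 0" using n P_nz Q0 qc_nz by (auto simp: field_simps)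
    ultimately have "is_pole h1 (qc / Q)" using B by blast
    then have "is_pole h1 (1 / (qc / Q))" using C \<open>qc / Q \<noteq> 0\<close> by blast
    then show "sigma_inv qc Q \<in> S1" using Q0 qc_nz by (simp add: S1_def sigma_inv_def)
  qed
  have up1: "\<forall>Q\<in>S1. Q \<notin> L1p qc P1 P2 P3 P4 \<longrightarrow> sigma qc Q \<in> S1"
  proof (intro ballI impI)
    fix Q assume Q: "Q \<in> S1" "Q \<notin> L1p qc P1 P2 P3 P4"
    then have Q0: "Q \<noteq> 0" and pQ: "is_pole h1 Q" and n: "Q \<noteq> 1 / P1" "Q \<noteq> 1 / P2" "Q \<noteq> P3 / qc" "Q \<noteq> P4 / qc"
      by (auto simp: S1_def L1p_def iota1_def sigma_inv_def)
    have a: "1 / Q \<noteq> P1" "1 / Q \<noteq> P2" "1 / Q \<noteq> 0" using n P_nz Q0 by (auto simp: field_simps)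
    have "is_pole h2 (qc / (1 / Q))" using D[OF A[OF C[OF pQ Q0] a(3,1,2)] a(3)] .
    moreover have "qc / (1 / Q) \<noteq> P3" "qc / (1 / Q) \<noteq> P4" "qc / (1 / Q) \<noteq> 0" using n P_nz Q0 qc_nz by (auto simp: field_simps)
    ultimately have "is_pole h1 (qc / (1 / Q))" using B by blast
    then show "sigma qc Q \<in> S1" using Q0 qc_nz by (simp add: S1_def sigma_def)
  qed
  have up2: "\<forall>Q\<in>S2. Q \<notin> L2p qc P1 P2 P3 P4 \<longrightarrow> sigma qc Q \<in> S2"
  proof (intro ballI impI)
    fix Q assume Q: "Q \<in> S2" "Q \<notin> L2p qc P1 P2 P3 P4"
    then have Q0: "Q \<noteq> 0" and pQ: "is_pole h2 Q" and n: "Q \<noteq> 1 / P1" "Q \<noteq> 1 / P2" "Q \<noteq> P3" "Q \<noteq> P4"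
      by (auto simp: S2_def L2p_def iota1_def)
    have a: "1 / Q \<noteq> P1" "1 / Q \<noteq> P2" "1 / Q \<noteq> 0" using n P_nz Q0 by (auto simp: field_simps)
    have "is_pole h2 (qc / (1 / Q))" using D[OF A[OF C[OF B[OF pQ Q0 n(3,4)] Q0] a(3,1,2)] a(3)] .
    then show "sigma qc Q \<in> S2" using Q0 qc_nz by (simp add: S2_def sigma_def)
  qed
  have dn2: "\<forall>Q\<in>S2. Q \<notin> L2m qc P1 P2 P3 P4 \<longrightarrow> sigma_inv qc Q \<in> S2"
  proof (intro ballI impI)
    fix Q assume Q: "Q \<in> S2" "Q \<notin> L2m qc P1 P2 P3 P4"
    then have Q0: "Q \<noteq> 0" and pQ: "is_pole h2 Q" and n: "Q \<noteq> qc * P1" "Q \<noteq> qc * P2" "Q \<noteq> qc / P3" "Q \<noteq> qc / P4"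
      by (auto simp: S2_def L2m_def iota2_def sigma_def)
    have a: "qc / Q \<noteq> P3" "qc / Q \<noteq> P4" "qc / Q \<noteq> 0" using n P_nz Q0 qc_nz by (auto simp: field_simps)
    have "is_pole h1 (1 / (qc / Q))" using C[OF B[OF D[OF pQ Q0] a(3,1,2)] a(3)] .
    moreover have b: "1 / (qc / Q) \<noteq> P1" "1 / (qc / Q) \<noteq> P2" "1 / (qc / Q) \<noteq> 0" using n P_nz Q0 qc_nz by (auto simp: field_simps)
    ultimately have "is_pole h2 (1 / (qc / Q))" using A by blast
    then show "sigma_inv qc Q \<in> S2" using Q0 qc_nz by (simp add: S2_def sigma_inv_def)
  qed
  show ?thesis unfolding qc_def[symmetric]
  proof (intro conjI allI impI)
    fix P assume "is_pole h1 P \<and> P \<noteq> 0"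
    then have P: "P \<in> S1" "P \<noteq> 0" by (auto simp: S1_def)
    show "\<exists>m. (sigma_inv qc ^^ m) P \<in> L1m qc P1 P2 P3 P4" by (rule iter_hit[OF fS1 P(1) dn1 inj_dn[OF P(2)]])
    show "\<exists>n. (sigma qc ^^ n) P \<in> L1p qc P1 P2 P3 P4" by (rule iter_hit[OF fS1 P(1) up1 inj_up[OF P(2)]])
  next
    fix P assume "is_pole h2 P \<and> P \<noteq> 0"
    then have P: "P \<in> S2" "P \<noteq> 0" by (auto simp: S2_def)
    show "\<exists>m. (sigma_inv qc ^^ m) P \<in> L2m qc P1 P2 P3 P4" by (rule iter_hit[OF fS2 P(1) dn2 inj_dn[OF P(2)]])
    show "\<exists>n. (sigma qc ^^ n) P \<in> L2p qc P1 P2 P3 P4" by (rule iter_hit[OF fS2 P(1) up2 inj_up[OF P(2)]])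
  qed
qed

end
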